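(* Let $(\Gamma,\psi)$ be an $H$-asymptotic couple with asymptotic integration. Suppose $\alpha\in(\Gamma^{<})'$ and $n\ge1$. Then $\alpha+(n+1)(s(\alpha)-\alpha)\in(\Gamma^{>})'$.
   Context: An asymptotic couple is a pair $(\Gamma,\psi)$ with $\Gamma$ an ordered abelian group and $\psi:\Gamma\setminus\{0\}\to\Gamma$ such that for all nonzero $\alpha,\beta$: $\alpha+\beta\ne0\Rightarrow\psi(\alpha+\beta)\ge\min(\psi(\alpha),\psi(\beta))$; $\psi(k\alpha)=\psi(\alpha)$ for $k\in\mathbb{Z}\setminus\{0\}$; $\alpha>0\Rightarrow\alpha+\psi(\alpha)>\psi(\beta)$. $H$-asymptotic: $0<\alpha\le\beta\Rightarrow\psi(\alpha)\ge\psi(\beta)$. Write $\gamma'=\gamma+\psi(\gamma)$ for $\gamma\ne0$, $(\Gamma^{>})'=\{\gamma':\gamma>0\}$, $(\Gamma^{<})'=\{\gamma':\gamma<0\}$. Asymptotic integration: every $\alpha\in\Gamma$ equals $\gamma'$ for a (necessarily unique) $\gamma\ne0$, denoted $\int\alpha$. The successor function is $s(\alpha)=\psi(\int\alpha)$. *)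

theory Defs
  imports Main
begin

text \<open>An asymptotic couple on an ordered abelian group 'a: the map psi is only
 meaningful on nonzero elements; its value at 0 is irrelevant.\<close>

definition nat_mult :: "nat \<Rightarrow> 'a::ab_group_add \<Rightarrow> 'a" where
  "nat_mult n a = (((+) a) ^^ n) 0"

definition int_mult :: "int \<Rightarrow> 'a::ab_group_add \<Rightarrow> 'a" where
  "int_mult k a = (if k \<ge> 0 then nat_mult (nat k) a else - nat_mult (nat (- k)) a)"

definition asymptotic_couple :: "('a::linordered_ab_group_add \<Rightarrow> 'a) \<Rightarrow> bool" where
  "asymptotic_couple psi \<longleftrightarrow>
     (\<forall>a b. a \<noteq> 0 \<and> b \<noteq> 0 \<and> a + b \<noteq> 0 \<longrightarrow> psi (a + b) \<ge> min (psi a) (psi b)) \<and>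
     (\<forall>a (k::int). a \<noteq> 0 \<and> k \<noteq> 0 \<longrightarrow> psi (int_mult k a) = psi a) \<and>
     (\<forall>a b. a > 0 \<and> b \<noteq> 0 \<longrightarrow> a + psi a > psi b)"

definition H_asymptotic :: "('a::linordered_ab_group_add \<Rightarrow> 'a) \<Rightarrow> bool" where
  "H_asymptotic psi \<longleftrightarrow> (\<forall>a b. 0 < a \<and> a \<le> b \<longrightarrow> psi a \<ge> psi b)"

definition deriv_ac :: "('a::linordered_ab_group_add \<Rightarrow> 'a) \<Rightarrow> 'a \<Rightarrow> 'a" where
  "deriv_ac psi g = g + psi g"

definition pos_deriv_set :: "('a::linordered_ab_group_add \<Rightarrow> 'a) \<Rightarrow> 'a set" where
  "pos_deriv_set psi = {deriv_ac psi g | g. g > 0}"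

definition neg_deriv_set :: "('a::linordered_ab_group_add \<Rightarrow> 'a) \<Rightarrow> 'a set" where
  "neg_deriv_set psi = {deriv_ac psi g | g. g < 0}"

definition has_asymptotic_integration :: "('a::linordered_ab_group_add \<Rightarrow> 'a) \<Rightarrow> bool" where
  "has_asymptotic_integration psi \<longleftrightarrow> (\<forall>a. \<exists>g. g \<noteq> 0 \<and> deriv_ac psi g = a)"

definition integral_ac :: "('a::linordered_ab_group_add \<Rightarrow> 'a) \<Rightarrow> 'a \<Rightarrow> 'a" where
  "integral_ac psi a = (THE g. g \<noteq> 0 \<and> deriv_ac psi g = a)"

definition successor_ac :: "('a::linordered_ab_group_add \<Rightarrow> 'a) \<Rightarrow> 'a \<Rightarrow> 'a" where
  "successor_ac psi a = psi (integral_ac psi a)"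

end

theory Submission
  imports Defs
begin

lemma nm_Suc: "nat_mult (Suc n) a = a + nat_mult n a"
  by (simp add: nat_mult_def)

lemma nm_0: "nat_mult 0 a = 0"
  by (simp add: nat_mult_def)

lemma nm_neg: "nat_mult n (- a) = - nat_mult n (a::'a::ab_group_add)"
  by (induction n) (simp_all add: nm_Suc nm_0)

lemma nm_pos: "(a::'a::linordered_ab_group_add) > 0 \<Longrightarrow> n \<ge> 1 \<Longrightarrow> nat_mult n a > 0"
proof (induction n)
  case 0 then show ?case by simp
next
  case (Suc n)
  show ?case
  proof (cases "n = 0")
    case True then show ?thesis using Suc by (simp add: nm_Suc nm_0)
  next
    case False
    then have "nat_mult n a > 0" using Suc by simp
    then show ?thesis using Suc by (simp add: nm_Suc add_pos_pos)
  qed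
qed

lemma psi_neg:
  assumes ac: "asymptotic_couple psi" and "a \<noteq> 0"
  shows "psi (- a) = psi a"
proof -
  have "int_mult (-1) a = - a" by (simp add: int_mult_def nm_Suc nm_0)
  then show ?thesis using ac assms(2) unfolding asymptotic_couple_def by (metis one_neq_zero neg_equal_0_iff_equal)
qed

lemma deriv_inj:
  fixes psi :: "'a::linordered_ab_group_add \<Rightarrow> 'a"
  assumes ac: "asymptotic_couple psi" and a: "a \<noteq> 0" and b: "b \<noteq> 0"
    and eq: "deriv_ac psi a = deriv_ac psi b"
  shows "a = b"
proof (rule ccontr)
  assume ne: "a \<noteq> b"
  define d where "d = a - b"
  have d0: "d \<noteq> 0" using ne d_def by simp
  have "a + psi a = b + psi b" using eq by (simp add: deriv_ac_def)
  then have dd: "d = psi b - psi a" unfolding d_def by (metis add_diff_cancel_left' diff_add_eq_diff_diff_swap add.commute diff_add_cancel add_diff_eq eq_diff_eq)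
  have nb: "- b \<noteq> 0" using b by simp
  have sum: "a + - b \<noteq> 0" using d0 d_def by simp
  have m: "psi d \<ge> min (psi a) (psi b)"
    using ac a nb sum psi_neg[OF ac b] unfolding asymptotic_couple_def d_def
    by (metis diff_conv_add_uminus)
  have m2: "psi a \<ge> min (psi d) (psi b)"
    using ac a d0 b unfolding asymptotic_couple_def d_def
    by (metis diff_add_cancel)
  have m3: "psi b \<ge> min (psi d) (psi a)"
    using ac a d0 b psi_neg[OF ac d0] unfolding asymptotic_couple_def d_def
    by (metis add.commute diff_add_cancel minus_diff_eq neg_equal_0_iff_equal)
  define e where "e = (if d > 0 then d else - d)"
  have ad: "e > 0" using d0 e_def by (auto simp: neq_iff)
  have pad: "psi e = psi d"
    using psi_neg[OF ac d0] unfolding e_def by simp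
  have h1: "e + psi e > psi a" using ac ad a unfolding asymptotic_couple_def by blast
  have h2: "e + psi e > psi b" using ac ad b unfolding asymptotic_couple_def by blast
  have ne: "psi a \<noteq> psi b" using dd d0 by auto
  show False
  proof (cases "psi a < psi b")
    case True
    have dp: "d > 0" using dd True by simp
    have "psi d \<le> psi a" using m2 True by (auto simp: min_def split: if_splits)
    moreover have "min (psi a) (psi b) = psi a" using True by simp
    ultimately have "psi d = psi a" using m by (metis order.antisym)
    then have "e + psi a > psi b" using h2 pad by simp
    then have "e > d" using dd by (metis add_less_cancel_right diff_add_cancel)
    then show False using dp e_def by simp
  next
    case False
    then have F: "psi b < psi a" using ne by simp
    have dp: "d < 0" using dd F by simp
    have "psi d \<le> psi b" using m3 F by (auto simp: min_def split: if_splits)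
    moreover have "min (psi a) (psi b) = psi b" using F by simp
    ultimately have "psi d = psi b" using m by (metis order.antisym)
    then have "e + psi b > psi a" using h1 pad by simp
    moreover have "\<not> 0 < d" using dp by (meson less_asym)
    then have "e = - d" using e_def by simp
    ultimately have "e > e" using dd by (metis add_less_cancel_right diff_add_cancel minus_diff_eq)
    then show False by simp
  qed
qed

theorem lemma3p10:
  fixes psi :: "'a::linordered_ab_group_add \<Rightarrow> 'a" and \<alpha> :: 'a and n :: nat
  assumes "asymptotic_couple psi"
    and "H_asymptotic psi"
    and "has_asymptotic_integration psi"
    and "\<alpha> \<in> neg_deriv_set psi"
    and "n \<ge> 1"
  shows "\<alpha> + nat_mult (n + 1) (successor_ac psi \<alpha> - \<alpha>) \<in> pos_deriv_set psi"
proof -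
  note ac = assms(1)
  obtain g where g: "g < 0" and ga: "\<alpha> = g + psi g"
    using assms(4) unfolding neg_deriv_set_def deriv_ac_def by blast
  have g0: "g \<noteq> 0" using g by simp
  have int: "integral_ac psi \<alpha> = g"
    unfolding integral_ac_def
  proof (rule the_equality)
    show "g \<noteq> 0 \<and> deriv_ac psi g = \<alpha>" using g0 ga by (simp add: deriv_ac_def)
  next
    fix h assume "h \<noteq> 0 \<and> deriv_ac psi h = \<alpha>"
    then show "h = g" using deriv_inj[OF ac, of h g] g0 ga by (simp add: deriv_ac_def)
  qed
  have s: "successor_ac psi \<alpha> - \<alpha> = - g"
    using int ga by (simp add: successor_ac_def)
  define \<delta> where "\<delta> = nat_mult n (- g)"
  have dpos: "\<delta> > 0" using nm_pos[of "-g" n] g assms(5) \<delta>_def by simp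
  have "int_mult (- int n) g = \<delta>"
    using assms(5) by (simp add: int_mult_def \<delta>_def nm_neg)
  moreover have "- int n \<noteq> 0" using assms(5) by simp
  ultimately have pd: "psi \<delta> = psi g" using ac g0 unfolding asymptotic_couple_def by metis
  have "\<alpha> + nat_mult (n + 1) (successor_ac psi \<alpha> - \<alpha>) = deriv_ac psi \<delta>"
    using s ga pd by (simp add: nm_Suc \<delta>_def deriv_ac_def algebra_simps)
  then show ?thesis using dpos unfolding pos_deriv_set_def by blast
qed

end
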